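(* Let $A=\mathbb{F}_q[t]$ and let $f_1,\ldots,f_r,g\in A$ be non-constant. Let $f$ be a polynomial function from $A/f_1A\times\cdots\times A/f_rA$ to $A/gA$. Then $f$ is represented by exactly one polynomial of the form $$F=\sum_{\mathbf{k}}b_{\mathbf{k}}(\mathbf{x})_{\mathbf{k}},$$ where the sum is over all $\mathbf{k}=(k_1,\ldots,k_r)\in\mathbb{N}^r$ with $0\le k_i<\mu(f_i,g)$ for each $i$, and the coefficients $b_{\mathbf{k}}\in A$ satisfy $b_{\mathbf{k}}=0$ or $$\deg b_{\mathbf{k}}<\deg\frac{g}{\gcd\!\Big(g,\prod_{i=1}^r\prod_{j=0}^{k_i-1}(a_{k_i}-a_j)\Big)}.$$
   Context: Write $\mathbb{F}_q=\{a_0=0,a_1,\ldots,a_{q-1}\}$. For $k\in\mathbb{N}$ with base-$q$ expansion $k=c_0+c_1q+\cdots+c_hq^h$ ($0\le c_s<q$), define $a_k=a_{c_0}+a_{c_1}t+\cdots+a_{c_h}t^h\in A$. Thus $\{a_0,\ldots,a_{q^d-1}\}$ is the set of polynomials of degree $<d$. For each $i$, $A/f_iA$ is identified with the complete residue system $\{a_0,\ldots,a_{q^{\deg f_i}-1}\}$ (polynomials of degree $<\deg f_i$). A function $f$ from $A/f_1A\times\cdots\times A/f_rA$ to $A/gA$ is a polynomial function (and $F\in A[x_1,\ldots,x_r]$ represents it) if $F(b_1,\ldots,b_r)\equiv f(b_1,\ldots,b_r)\pmod g$ for all $(b_1,\ldots,b_r)$ with $\deg b_i<\deg f_i$ (i.e.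 $b_i\in\{a_0,\ldots,a_{q^{\deg f_i}-1}\}$) for each $i$. For $\mathbf{k}\in\mathbb{N}^r$, $(\mathbf{x})_{\mathbf{k}}=\prod_{i=1}^r(x_i-a_0)(x_i-a_1)\cdots(x_i-a_{k_i-1})$ (empty product $=1$). $\lambda(g)$ is the smallest positive integer $k$ such that $g\mid\prod_{j=0}^{k-1}(a_k-a_j)$, and $\mu(f_i,g)=\min(q^{\deg f_i},\lambda(g))$. *)

theory Defs
  imports "HOL-Computational_Algebra.Polynomial_Factorial" "HOL-Computational_Algebra.Euclidean_Algorithm" "HOL-Library.Poly_Mapping"
begin

text \<open>Multivariate polynomials over A = F_q[t] in variables x_0, x_1, ... (indexed by nat),
  represented as finitely supported maps from monomials (exponent vectors) to coefficients.\<close>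

type_synonym 'a mpoly = "(nat \<Rightarrow>\<^sub>0 nat) \<Rightarrow>\<^sub>0 'a poly"

definition mvar :: "nat \<Rightarrow> 'a::comm_ring_1 mpoly" where
  "mvar i = Poly_Mapping.single (Poly_Mapping.single i 1) 1"

definition mconst :: "'a::comm_ring_1 poly \<Rightarrow> 'a mpoly" where
  "mconst c = Poly_Mapping.single 0 c"

definition mvars :: "'a::comm_ring_1 mpoly \<Rightarrow> nat set" where
  "mvars F = \<Union> (Poly_Mapping.keys ` Poly_Mapping.keys F)"

definition meval :: "'a::comm_ring_1 mpoly \<Rightarrow> (nat \<Rightarrow> 'a poly) \<Rightarrow> 'a poly" where
  "meval F v = (\<Sum>m\<in>Poly_Mapping.keys F.
      Poly_Mapping.lookup F m * (\<Prod>i\<in>Poly_Mapping.keys m. v i ^ Poly_Mapping.lookup m i))"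

text \<open>The enumeration a_k of A: e enumerates F_q with e 0 = 0, q = card (UNIV :: 'a set), and
  a_k = e(c_0) + e(c_1) t + ... for the base-q digits c_s of k.\<close>

definition aseq :: "(nat \<Rightarrow> 'a::{field,finite}) \<Rightarrow> nat \<Rightarrow> 'a poly" where
  "aseq e k = (\<Sum>s\<le>k. monom (e ((k div card (UNIV :: 'a set) ^ s) mod card (UNIV :: 'a set))) s)"

definition aprod :: "(nat \<Rightarrow> 'a::{field,finite}) \<Rightarrow> nat \<Rightarrow> 'a poly" where
  "aprod e k = (\<Prod>j<k. aseq e k - aseq e j)"

definition lambda_g :: "(nat \<Rightarrow> 'a::{field,finite}) \<Rightarrow> 'a poly \<Rightarrow> nat" where
  "lambda_g e g = (LEAST k. 0 < k \<and> g dvd aprod e k)"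

definition mu :: "(nat \<Rightarrow> 'a::{field,finite}) \<Rightarrow> 'a poly \<Rightarrow> 'a poly \<Rightarrow> nat" where
  "mu e fi g = min (card (UNIV :: 'a set) ^ degree fi) (lambda_g e g)"

definition mfalling :: "(nat \<Rightarrow> 'a::{field,finite}) \<Rightarrow> nat \<Rightarrow> (nat \<Rightarrow> nat) \<Rightarrow> 'a mpoly" where
  "mfalling e r k = (\<Prod>i<r. \<Prod>j<k i. mvar i - mconst (aseq e j))"

text \<open>Domain A/f_1 A x ... x A/f_r A via residues of degree < deg f_i (unused coordinates are 0).\<close>
definition resdom :: "nat \<Rightarrow> (nat \<Rightarrow> 'a::{field,finite} poly) \<Rightarrow> (nat \<Rightarrow> 'a poly) set" where
  "resdom r fs = {b. (\<forall>i<r. degree (b i) < degree (fs i)) \<and> (\<forall>i\<ge>r. b i = 0)}"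

definition represents :: "nat \<Rightarrow> (nat \<Rightarrow> 'a::{field,finite} poly) \<Rightarrow> 'a poly
    \<Rightarrow> ((nat \<Rightarrow> 'a poly) \<Rightarrow> 'a poly) \<Rightarrow> 'a mpoly \<Rightarrow> bool" where
  "represents r fs g f F \<longleftrightarrow> mvars F \<subseteq> {..<r} \<and>
     (\<forall>b\<in>resdom r fs. meval F b mod g = f b mod g)"

definition is_poly_fun :: "nat \<Rightarrow> (nat \<Rightarrow> 'a::{field,finite} poly) \<Rightarrow> 'a poly
    \<Rightarrow> ((nat \<Rightarrow> 'a poly) \<Rightarrow> 'a poly) \<Rightarrow> bool" where
  "is_poly_fun r fs g f \<longleftrightarrow> (\<exists>F. represents r fs g f F)"

definition kset :: "(nat \<Rightarrow> 'a::{field,finite}) \<Rightarrow> nat \<Rightarrow> (nat \<Rightarrow> 'a poly) \<Rightarrow> 'a poly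
    \<Rightarrow> (nat \<Rightarrow> nat) set" where
  "kset e r fs g = {k. (\<forall>i<r. k i < mu e (fs i) g) \<and> (\<forall>i\<ge>r. k i = 0)}"

end

theory Submission
  imports Defs "HOL-Library.FuncSet"
begin


locale enumq =
  fixes e :: "nat \<Rightarrow> 'a::{field_gcd,finite}"
  assumes enum: "bij_betw e {..<card (UNIV :: 'a set)} UNIV" and e0: "e 0 = 0"
begin


lemma q_ge2: "card (UNIV::'a set) \<ge> 2"
proof -
  have "card {0::'a, 1} \<le> card (UNIV::'a set)" by (rule card_mono) auto
  then show ?thesis by simp
qed

lemma big_pow: "s < card (UNIV::'a set) ^ s"
proof -
  have "s < 2 ^ s" by (rule less_exp)
  also have "\<dots> \<le> card (UNIV::'a set) ^ s" using q_ge2 by (simp add: power_mono)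
  finally show ?thesis .
qed

lemma coeff_aseq: "coeff (aseq e k) s = e ((k div card (UNIV::'a set) ^ s) mod card (UNIV::'a set))"
proof -
  have "coeff (aseq e k) s = (\<Sum>s'\<le>k. if s' = s then e ((k div card (UNIV::'a set) ^ s') mod card (UNIV::'a set)) else 0)"
    unfolding aseq_def by (simp add: coeff_sum coeff_monom)
  also have "\<dots> = (if s \<le> k then e ((k div card (UNIV::'a set) ^ s) mod card (UNIV::'a set)) else 0)"
    by (simp add: sum.delta')
  also have "\<dots> = e ((k div card (UNIV::'a set) ^ s) mod card (UNIV::'a set))"
  proof (cases "s \<le> k")
    case False
    then have "k < card (UNIV::'a set) ^ s" using big_pow[of s] by linarith
    then show ?thesis using False e0 by simp
  qed simp
  finally show ?thesis .
qed

lemma digit_split: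
  assumes "i < card (UNIV::'a set) ^ m"
  shows "((N * card (UNIV::'a set) ^ m + i) div card (UNIV::'a set) ^ s) mod card (UNIV::'a set) =
     (if s < m then (i div card (UNIV::'a set) ^ s) mod card (UNIV::'a set) else (N div card (UNIV::'a set) ^ (s - m)) mod card (UNIV::'a set))"
proof (cases "s < m")
  case True
  have qs: "card (UNIV::'a set) ^ s > 0" using q_ge2 by simp
  have "card (UNIV::'a set) ^ m = card (UNIV::'a set) ^ s * card (UNIV::'a set) ^ (m - s)" using True by (simp flip: power_add)
  then have "N * card (UNIV::'a set) ^ m + i = i + (N * card (UNIV::'a set) ^ (m - s)) * card (UNIV::'a set) ^ s" by simp
  then have "(N * card (UNIV::'a set) ^ m + i) div card (UNIV::'a set) ^ s = N * card (UNIV::'a set) ^ (m - s) + i div card (UNIV::'a set) ^ s"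
    using qs by (simp only: div_mult_self1 [OF less_imp_neq[OF qs, symmetric]])
  moreover have "m - s = Suc (m - s - 1)" using True by simp
  then have "card (UNIV::'a set) ^ (m - s) = card (UNIV::'a set) * card (UNIV::'a set) ^ (m - s - 1)"
    by (metis power_Suc)
  ultimately have "(N * card (UNIV::'a set) ^ m + i) div card (UNIV::'a set) ^ s = i div card (UNIV::'a set) ^ s + (N * card (UNIV::'a set) ^ (m - s - 1)) * card (UNIV::'a set)"
    by (simp add: ac_simps)
  then show ?thesis using True by (simp only: mod_mult_self1) simp
next
  case False
  have "card (UNIV::'a set) ^ s = card (UNIV::'a set) ^ m * card (UNIV::'a set) ^ (s - m)" using False by (simp flip: power_add)
  then have "(N * card (UNIV::'a set) ^ m + i) div card (UNIV::'a set) ^ s = ((N * card (UNIV::'a set) ^ m + i) div card (UNIV::'a set) ^ m) div card (UNIV::'a set) ^ (s - m)"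
    by (simp add: div_mult2_eq)
  also have "(N * card (UNIV::'a set) ^ m + i) div card (UNIV::'a set) ^ m = N" using assms q_ge2 by simp
  finally show ?thesis using False by simp
qed

lemma aseq_split:
  assumes "i < card (UNIV::'a set) ^ m"
  shows "aseq e (N * card (UNIV::'a set) ^ m + i) = monom 1 m * aseq e N + aseq e i"
proof (rule poly_eqI)
  fix s
  show "coeff (aseq e (N * card (UNIV::'a set) ^ m + i)) s = coeff (monom 1 m * aseq e N + aseq e i) s"
  proof (cases "s < m")
    case True
    then show ?thesis using assms by (simp add: coeff_aseq digit_split coeff_monom_mult)
  next
    case False
    have "card (UNIV::'a set) ^ m \<le> card (UNIV::'a set) ^ s" using False q_ge2 by (simp add: power_increasing)
    then have "i div card (UNIV::'a set) ^ s = 0" using assms by simp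
    then show ?thesis using assms False e0 by (simp add: coeff_aseq digit_split coeff_monom_mult)
  qed
qed

lemma aseq_0: "aseq e 0 = 0"
  by (rule poly_eqI) (simp add: coeff_aseq e0)

lemma aseq_small: "N < card (UNIV::'a set) \<Longrightarrow> aseq e N = [:e N:]"
proof (rule poly_eqI)
  fix s assume N: "N < card (UNIV::'a set)"
  show "coeff (aseq e N) s = coeff [:e N:] s"
  proof (cases s)
    case 0 then show ?thesis using N by (simp add: coeff_aseq)
  next
    case (Suc s')
    have "card (UNIV::'a set) \<le> card (UNIV::'a set) ^ s" using Suc q_ge2 by (simp add: Suc)
    then have "N div card (UNIV::'a set) ^ s = 0" using N by simp
    then show ?thesis using Suc by (simp add: coeff_aseq e0)
  qed
qed

lemma aseq_high_coeff: "n < card (UNIV::'a set) ^ d \<Longrightarrow> d \<le> s \<Longrightarrow> coeff (aseq e n) s = 0"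
proof -
  assume "n < card (UNIV::'a set) ^ d" "d \<le> s"
  moreover have "card (UNIV::'a set) ^ d \<le> card (UNIV::'a set) ^ s" using \<open>d \<le> s\<close> q_ge2 by (simp add: power_increasing)
  ultimately show ?thesis by (simp add: coeff_aseq e0)
qed

lemma aseq_degree: "n < card (UNIV::'a set) ^ d \<Longrightarrow> 0 < d \<Longrightarrow> degree (aseq e n) < d"
proof -
  assume a: "n < card (UNIV::'a set) ^ d" "0 < d"
  have "degree (aseq e n) \<le> d - 1"
    by (rule degree_le) (use a aseq_high_coeff in auto)
  then show ?thesis using a by linarith
qed

lemma aseq_surj: "(\<forall>s\<ge>d. coeff p s = 0) \<Longrightarrow> \<exists>j<card (UNIV::'a set) ^ d. aseq e j = p"
proof (induction d arbitrary: p)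
  case 0
  then have "p = 0" by (simp add: poly_eq_iff)
  then show ?case using aseq_0 by auto
next
  case (Suc d)
  obtain N where N: "N < card (UNIV::'a set)" "e N = coeff p d"
    using enum unfolding bij_betw_def by (metis UNIV_I imageE lessThan_iff)
  define p' where "p' = p - monom (coeff p d) d"
  have "\<forall>s\<ge>d. coeff p' s = 0"
    using Suc.prems by (auto simp: p'_def coeff_monom le_Suc_eq)
  then obtain i where i: "i < card (UNIV::'a set) ^ d" "aseq e i = p'" using Suc.IH by blast
  have "N * card (UNIV::'a set) ^ d + i < (N + 1) * card (UNIV::'a set) ^ d" using i by simp
  also have "\<dots> \<le> card (UNIV::'a set) * card (UNIV::'a set) ^ d" using N by (intro mult_right_mono) auto
  finally have lt: "N * card (UNIV::'a set) ^ d + i < card (UNIV::'a set) ^ Suc d" by simp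
  have "aseq e (N * card (UNIV::'a set) ^ d + i) = monom 1 d * [:e N:] + p'"
    using aseq_split[OF i(1)] aseq_small[OF N(1)] i by simp
  also have "\<dots> = p" using N by (simp add: p'_def monom_altdef)
  finally show ?case using lt by blast
qed

lemma digits_eq: "(\<forall>s. (n div card (UNIV::'a set) ^ s) mod card (UNIV::'a set) = (n' div card (UNIV::'a set) ^ s) mod card (UNIV::'a set)) \<Longrightarrow> n = n'"
proof (induction "n + n'" arbitrary: n n' rule: less_induct)
  case less
  show ?case
  proof (cases "n + n' = 0")
    case True then show ?thesis by simp
  next
    case False
    have a: "x div card (UNIV::'a set) \<le> x" for x :: nat by simp
    have b: "x div card (UNIV::'a set) < x" if "x > 0" for x :: nat
      using that q_ge2 by (intro div_less_dividend) auto
    have lt: "n div card (UNIV::'a set) + n' div card (UNIV::'a set) < n + n'"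
    proof (cases "n > 0")
      case True then show ?thesis using a[of n'] b[of n] by linarith
    next
      case False then have "n' > 0" using \<open>n + n' \<noteq> 0\<close> by simp
      then show ?thesis using a[of n] b[of n'] by linarith
    qed
    have "\<forall>s. (n div card (UNIV::'a set) div card (UNIV::'a set) ^ s) mod card (UNIV::'a set) = (n' div card (UNIV::'a set) div card (UNIV::'a set) ^ s) mod card (UNIV::'a set)"
    proof
      fix s
      from less.prems have "(n div card (UNIV::'a set) ^ Suc s) mod card (UNIV::'a set) = (n' div card (UNIV::'a set) ^ Suc s) mod card (UNIV::'a set)" by blast
      then show "(n div card (UNIV::'a set) div card (UNIV::'a set) ^ s) mod card (UNIV::'a set) = (n' div card (UNIV::'a set) div card (UNIV::'a set) ^ s) mod card (UNIV::'a set)"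
        by (simp add: div_mult2_eq)
    qed
    then have "n div card (UNIV::'a set) = n' div card (UNIV::'a set)" using less.hyps[OF lt] by blast
    moreover have "n mod card (UNIV::'a set) = n' mod card (UNIV::'a set)" using less.prems[rule_format, of 0] by simp
    ultimately show ?thesis by (metis div_mult_mod_eq)
  qed
qed

lemma aseq_inj: "aseq e n = aseq e n' \<Longrightarrow> n = n'"
proof -
  assume h: "aseq e n = aseq e n'"
  have "\<forall>s. (n div card (UNIV::'a set) ^ s) mod card (UNIV::'a set) = (n' div card (UNIV::'a set) ^ s) mod card (UNIV::'a set)"
  proof
    fix s
    have "e ((n div card (UNIV::'a set) ^ s) mod card (UNIV::'a set)) = e ((n' div card (UNIV::'a set) ^ s) mod card (UNIV::'a set))"
      using h by (metis coeff_aseq)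
    moreover have "(n div card (UNIV::'a set) ^ s) mod card (UNIV::'a set) < card (UNIV::'a set)" "(n' div card (UNIV::'a set) ^ s) mod card (UNIV::'a set) < card (UNIV::'a set)"
      using q_ge2 by auto
    ultimately show "(n div card (UNIV::'a set) ^ s) mod card (UNIV::'a set) = (n' div card (UNIV::'a set) ^ s) mod card (UNIV::'a set)"
      using enum unfolding bij_betw_def inj_on_def by blast
  qed
  then show ?thesis by (rule digits_eq)
qed

lemma aseq_pow: "aseq e (card (UNIV::'a set) ^ d) = monom (e 1) d"
  using aseq_split[of 0 d 1] aseq_small[of 1] q_ge2 aseq_0 by (simp add: monom_altdef)

end



lemma card_filter_sum: "finite A \<Longrightarrow> card {x\<in>A. P x} = (\<Sum>x\<in>A. if P x then 1 else 0::nat)"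
  by (simp add: sum.If_cases Int_def conj_commute)

lemma mult_count:
  fixes y :: "nat \<Rightarrow> 'b::factorial_semiring"
  assumes p: "prime p" and fin: "finite J" and nz: "\<forall>j\<in>J. y j \<noteq> 0"
    and bd: "\<forall>j\<in>J. multiplicity p (y j) \<le> N"
  shows "multiplicity p (\<Prod>j\<in>J. y j) = (\<Sum>n\<in>{1..N}. card {j\<in>J. p ^ n dvd y j})"
proof -
  have "multiplicity p (\<Prod>j\<in>J. y j) = (\<Sum>j\<in>J. multiplicity p (y j))"
    using p nz fin by (intro prime_elem_multiplicity_prod_distrib) auto
  also have "\<dots> = (\<Sum>j\<in>J. card {n\<in>{1..N}. p ^ n dvd y j})"
  proof (rule sum.cong)
    fix j assume j: "j \<in> J"
    have "{n\<in>{1..N}. p ^ n dvd y j} = {1..multiplicity p (y j)}"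
      using bd j nz power_dvd_iff_le_multiplicity[of "y j" p] p by (auto simp: prime_elem_not_unit)
    then show "multiplicity p (y j) = card {n\<in>{1..N}. p ^ n dvd y j}" by simp
  qed simp
  also have "\<dots> = (\<Sum>j\<in>J. \<Sum>n\<in>{1..N}. if p ^ n dvd y j then 1 else 0)"
    by (intro sum.cong refl card_filter_sum) simp
  also have "\<dots> = (\<Sum>n\<in>{1..N}. \<Sum>j\<in>J. if p ^ n dvd y j then 1 else 0)"
    by (rule sum.swap)
  also have "\<dots> = (\<Sum>n\<in>{1..N}. card {j\<in>J. p ^ n dvd y j})"
    using fin by (simp add: card_filter_sum)
  finally show ?thesis .
qed

context enumq
begin

lemma small_dvd:
  fixes M x :: "'a poly"
  assumes "M \<noteq> 0" "M dvd x" "\<forall>s\<ge>degree M. coeff x s = 0"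
  shows "x = 0"
proof (rule ccontr)
  assume "x \<noteq> 0"
  then have "degree M \<le> degree x" using dvd_imp_degree_le[OF assms(2)] by blast
  then have "coeff x (degree x) = 0" using assms by blast
  then show False using \<open>x \<noteq> 0\<close> by simp
qed

lemma aseq_divmod:
  "aseq e j = monom 1 m * aseq e (j div card (UNIV::'a set) ^ m) + aseq e (j mod card (UNIV::'a set) ^ m)"
proof -
  have "j mod card (UNIV::'a set) ^ m < card (UNIV::'a set) ^ m" using q_ge2 by simp
  from aseq_split[OF this, of "j div card (UNIV::'a set) ^ m"] show ?thesis by (simp only: div_mult_mod_eq)
qed

lemma count_lower:
  assumes M: "M \<noteq> 0"
  shows "k div card (UNIV::'a set) ^ degree M \<le> card {j\<in>{..<k}. M dvd (a - aseq e j)}"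
proof -
  define Q where "Q = card (UNIV::'a set) ^ degree M"
  define K where "K = k div Q"
  have Q0: "Q > 0" using q_ge2 by (simp add: Q_def)
  have ex: "\<exists>i. i < Q \<and> M dvd (a - aseq e (N * Q + i))" for N
  proof -
    define x where "x = a - monom 1 (degree M) * aseq e N"
    define p where "p = x mod M"
    have "\<forall>s\<ge>degree M. coeff p s = 0"
      using degree_mod_less[OF M, of x] by (auto simp: p_def intro: coeff_eq_0)
    then obtain i where i: "i < Q" "aseq e i = p" using aseq_surj unfolding Q_def by blast
    have "aseq e (N * Q + i) = monom 1 (degree M) * aseq e N + p"
      using aseq_split[of i "degree M" N] i by (simp add: Q_def)
    then have "a - aseq e (N * Q + i) = x - x mod M" by (simp add: x_def p_def)
    moreover have "M dvd x - x mod M" by (simp add: mod_eq_dvd_iff[symmetric])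
    ultimately show ?thesis using i by auto
  qed
  then obtain \<phi> where phi: "\<And>N. \<phi> N < Q \<and> M dvd (a - aseq e (N * Q + \<phi> N))" by metis
  have "card {..<K} \<le> card {j\<in>{..<k}. M dvd (a - aseq e j)}"
  proof (rule card_inj_on_le[where f = "\<lambda>N. N * Q + \<phi> N"])
    show "inj_on (\<lambda>N. N * Q + \<phi> N) {..<K}"
    proof (rule inj_onI)
      fix N N' assume "N * Q + \<phi> N = N' * Q + \<phi> N'"
      then have "(N * Q + \<phi> N) div Q = (N' * Q + \<phi> N') div Q" by simp
      then show "N = N'" using phi[of N] phi[of N'] Q0 by simp
    qed
    show "(\<lambda>N. N * Q + \<phi> N) ` {..<K} \<subseteq> {j\<in>{..<k}. M dvd (a - aseq e j)}"
    proof
      fix j assume "j \<in> (\<lambda>N. N * Q + \<phi> N) ` {..<K}"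
      then obtain N where N: "N < K" "j = N * Q + \<phi> N" by auto
      have "N * Q + \<phi> N < (N + 1) * Q" using phi[of N] by simp
      also have "\<dots> \<le> K * Q" using N by (intro mult_right_mono) auto
      also have "\<dots> \<le> k" by (simp add: K_def)
      finally show "j \<in> {j\<in>{..<k}. M dvd (a - aseq e j)}" using N phi[of N] by simp
    qed
  qed simp
  then show ?thesis by (simp add: K_def Q_def)
qed

lemma count_upper:
  assumes M: "M \<noteq> 0"
  shows "card {j\<in>{..<k}. M dvd (aseq e k - aseq e j)} \<le> k div card (UNIV::'a set) ^ degree M"
proof -
  define m where "m = degree M"
  define Q where "Q = card (UNIV::'a set) ^ m"
  define K where "K = k div Q"
  define S where "S = {j\<in>{..<k}. M dvd (aseq e k - aseq e j)}"
  have Q0: "Q > 0" using q_ge2 by (simp add: Q_def)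
  have dm: "aseq e j = monom 1 m * aseq e (j div Q) + aseq e (j mod Q)" for j
    using aseq_divmod[of j m] by (simp add: Q_def)
  have modlt: "j mod Q < Q" for j using Q0 by simp
  have hc: "\<forall>s\<ge>degree M. coeff (aseq e (i mod Q) - aseq e (i' mod Q)) s = 0" for i i'
  proof -
    have "i mod Q < card (UNIV::'a set) ^ m" "i' mod Q < card (UNIV::'a set) ^ m"
      using modlt by (auto simp: Q_def)
    then show ?thesis using aseq_high_coeff by (simp add: m_def)
  qed
  have key: "M dvd aseq e (i mod Q) - aseq e (i' mod Q) \<Longrightarrow> i mod Q = i' mod Q" for i i'
    using small_dvd[OF M _ hc[of i i']] aseq_inj by auto
  have "card S \<le> card {..<K}"
  proof (rule card_inj_on_le[where f = "\<lambda>j. j div Q"])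
    show "inj_on (\<lambda>j. j div Q) S"
    proof (rule inj_onI)
      fix j j' assume j: "j \<in> S" "j' \<in> S" and eq: "j div Q = j' div Q"
      have "M dvd (aseq e k - aseq e j) - (aseq e k - aseq e j')"
        using dvd_diff[of M "aseq e k - aseq e j" "aseq e k - aseq e j'"] j by (simp add: S_def)
      then have "M dvd aseq e (j' mod Q) - aseq e (j mod Q)"
        using dm[of j] dm[of j'] eq by simp
      then have "j' mod Q = j mod Q" by (rule key)
      then show "j = j'" using eq by (metis div_mult_mod_eq)
    qed
    show "(\<lambda>j. j div Q) ` S \<subseteq> {..<K}"
    proof
      fix J assume "J \<in> (\<lambda>j. j div Q) ` S"
      then obtain j where j: "j \<in> S" "J = j div Q" by auto
      have "j div Q \<le> K" using j by (auto simp: S_def K_def intro: div_le_mono)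
      moreover have "j div Q \<noteq> K"
      proof
        assume jK: "j div Q = K"
        have "j < k" using j by (simp add: S_def)
        then have lt: "j mod Q < k mod Q"
          using jK by (metis K_def add_less_cancel_left div_mult_mod_eq)
        have "M dvd aseq e k - aseq e j" using j by (simp add: S_def)
        then have "M dvd aseq e (k mod Q) - aseq e (j mod Q)"
          using dm[of j] dm[of k] jK by (simp add: K_def)
        then have "k mod Q = j mod Q" by (rule key)
        then show False using lt by simp
      qed
      ultimately show "J \<in> {..<K}" using j by simp
    qed
  qed (simp add: S_def)
  then show ?thesis by (simp add: S_def K_def Q_def m_def)
qed

lemma fall_dvd: "aprod e k dvd (\<Prod>j<k. a - aseq e j)"
proof (cases "\<exists>j<k. a = aseq e j")
  case True
  then have "(\<Prod>j<k. a - aseq e j) = 0" by (intro prod_zero) auto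
  then show ?thesis by (metis dvd_0_right)
next
  case False
  have ynz: "\<forall>j\<in>{..<k}. a - aseq e j \<noteq> 0" using False by auto
  have znz: "\<forall>j\<in>{..<k}. aseq e k - aseq e j \<noteq> 0" using aseq_inj by fastforce
  show ?thesis unfolding aprod_def
  proof (rule multiplicity_le_imp_dvd)
    show "(\<Prod>j<k. aseq e k - aseq e j) \<noteq> 0" using znz by simp
    fix p :: "'a poly" assume p: "prime p"
    define N where "N = (\<Sum>j<k. multiplicity p (aseq e k - aseq e j)) + (\<Sum>j<k. multiplicity p (a - aseq e j))"
    have bz: "\<forall>j\<in>{..<k}. multiplicity p (aseq e k - aseq e j) \<le> N"
    proof
      fix j assume "j \<in> {..<k}"
      then have "multiplicity p (aseq e k - aseq e j) \<le> (\<Sum>j<k. multiplicity p (aseq e k - aseq e j))"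
        by (intro member_le_sum) auto
      then show "multiplicity p (aseq e k - aseq e j) \<le> N" unfolding N_def by linarith
    qed
    have by': "\<forall>j\<in>{..<k}. multiplicity p (a - aseq e j) \<le> N"
    proof
      fix j assume "j \<in> {..<k}"
      then have "multiplicity p (a - aseq e j) \<le> (\<Sum>j<k. multiplicity p (a - aseq e j))"
        by (intro member_le_sum) auto
      then show "multiplicity p (a - aseq e j) \<le> N" unfolding N_def by linarith
    qed
    have pn: "p ^ n \<noteq> 0" for n using p by auto
    have "multiplicity p (\<Prod>j<k. aseq e k - aseq e j) = (\<Sum>n\<in>{1..N}. card {j\<in>{..<k}. p ^ n dvd (aseq e k - aseq e j)})"
      by (rule mult_count[OF p _ znz bz]) simp
    also have "\<dots> \<le> (\<Sum>n\<in>{1..N}. card {j\<in>{..<k}. p ^ n dvd (a - aseq e j)})"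
      by (rule sum_mono) (use count_upper[OF pn] count_lower[OF pn] le_trans in blast)
    also have "\<dots> = multiplicity p (\<Prod>j<k. a - aseq e j)"
      by (rule mult_count[OF p _ ynz by', symmetric]) simp
    finally show "multiplicity p (\<Prod>j<k. aseq e k - aseq e j) \<le> multiplicity p (\<Prod>j<k. a - aseq e j)" .
  qed
qed

end



definition mon :: "(nat \<Rightarrow>\<^sub>0 nat) \<Rightarrow> (nat \<Rightarrow> 'a::comm_ring_1 poly) \<Rightarrow> 'a poly" where
  "mon m v = (\<Prod>i\<in>Poly_Mapping.keys m. v i ^ Poly_Mapping.lookup m i)"

lemma mon_superset:
  assumes "finite S" "Poly_Mapping.keys m \<subseteq> S"
  shows "mon m v = (\<Prod>i\<in>S. v i ^ Poly_Mapping.lookup m i)"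
  unfolding mon_def
  by (rule prod.mono_neutral_left) (use assms in \<open>auto simp: in_keys_iff\<close>)

lemma mon_add: "mon (m + l) v = mon m v * mon l v"
proof -
  let ?S = "Poly_Mapping.keys m \<union> Poly_Mapping.keys l"
  have "mon (m + l) v = (\<Prod>i\<in>?S. v i ^ Poly_Mapping.lookup (m + l) i)"
    by (rule mon_superset) (auto dest: keys_add[THEN subsetD])
  also have "\<dots> = (\<Prod>i\<in>?S. v i ^ Poly_Mapping.lookup m i) * (\<Prod>i\<in>?S. v i ^ Poly_Mapping.lookup l i)"
    by (simp add: lookup_add power_add prod.distrib)
  also have "\<dots> = mon m v * mon l v"
    using mon_superset[of ?S m v] mon_superset[of ?S l v] by simp
  finally show ?thesis .
qed

lemma mon_zero [simp]: "mon 0 v = 1"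
  by (simp add: mon_def)

lemma meval_alt: "meval F v = (\<Sum>m\<in>Poly_Mapping.keys F. Poly_Mapping.lookup F m * mon m v)"
  by (simp add: meval_def mon_def)

lemma meval_superset:
  assumes "finite S" "Poly_Mapping.keys F \<subseteq> S"
  shows "meval F v = (\<Sum>m\<in>S. Poly_Mapping.lookup F m * mon m v)"
  unfolding meval_alt
  by (rule sum.mono_neutral_left) (use assms in \<open>auto simp: in_keys_iff\<close>)

lemma meval_add: "meval (F + G) v = meval F v + meval G v"
proof -
  let ?S = "Poly_Mapping.keys F \<union> Poly_Mapping.keys G"
  have "meval (F + G) v = (\<Sum>m\<in>?S. Poly_Mapping.lookup (F + G) m * mon m v)"
    by (rule meval_superset) (auto dest: keys_add[THEN subsetD])
  also have "\<dots> = meval F v + meval G v"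
    by (simp add: meval_superset[of ?S] lookup_add distrib_right sum.distrib)
  finally show ?thesis .
qed

lemma meval_zero [simp]: "meval 0 v = 0"
  by (simp add: meval_def)

lemma meval_uminus: "meval (- F) v = - meval F v"
  by (simp add: meval_alt sum_negf)

lemma meval_diff: "meval (F - G) v = meval F v - meval G v"
  using meval_add[of F "- G" v] by (simp add: meval_uminus)

lemma meval_sum: "meval (\<Sum>x\<in>A. F x) v = (\<Sum>x\<in>A. meval (F x) v)"
  by (induction A rule: infinite_finite_induct) (auto simp: meval_add)

lemma meval_single: "meval (Poly_Mapping.single m c) v = c * mon m v"
  by (simp add: meval_alt)

lemma mpoly_decomp: "F = (\<Sum>m\<in>Poly_Mapping.keys F. Poly_Mapping.single m (Poly_Mapping.lookup F m))"
proof (rule poly_mapping_eqI)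
  fix k
  have "Poly_Mapping.lookup (\<Sum>m\<in>Poly_Mapping.keys F. Poly_Mapping.single m (Poly_Mapping.lookup F m)) k
     = (\<Sum>m\<in>Poly_Mapping.keys F. if m = k then Poly_Mapping.lookup F m else 0)"
    by (simp add: lookup_sum lookup_single when_def)
  also have "\<dots> = Poly_Mapping.lookup F k"
    by (simp add: sum.delta in_keys_iff)
  finally show "Poly_Mapping.lookup F k = Poly_Mapping.lookup (\<Sum>m\<in>Poly_Mapping.keys F. Poly_Mapping.single m (Poly_Mapping.lookup F m)) k"
    by simp
qed

lemma meval_mult: "meval (F * G) v = meval F v * meval G v"
proof -
  let ?s = "\<lambda>m. Poly_Mapping.single m (Poly_Mapping.lookup F m)"
  let ?t = "\<lambda>l. Poly_Mapping.single l (Poly_Mapping.lookup G l)"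
  have "F * G = (\<Sum>m\<in>Poly_Mapping.keys F. ?s m) * (\<Sum>l\<in>Poly_Mapping.keys G. ?t l)"
    by (subst mpoly_decomp[of F], subst mpoly_decomp[of G]) (rule refl)
  also have "\<dots> = (\<Sum>m\<in>Poly_Mapping.keys F. \<Sum>l\<in>Poly_Mapping.keys G. ?s m * ?t l)"
    by (rule sum_product)
  finally have "meval (F * G) v = (\<Sum>m\<in>Poly_Mapping.keys F. \<Sum>l\<in>Poly_Mapping.keys G. meval (?s m * ?t l) v)"
    by (simp add: meval_sum)
  also have "\<dots> = (\<Sum>m\<in>Poly_Mapping.keys F. \<Sum>l\<in>Poly_Mapping.keys G. meval (?s m) v * meval (?t l) v)"
    by (simp add: mult_single meval_single mon_add ac_simps)
  also have "\<dots> = (\<Sum>m\<in>Poly_Mapping.keys F. meval (?s m) v) * (\<Sum>l\<in>Poly_Mapping.keys G. meval (?t l) v)"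
    by (simp add: sum_product)
  also have "\<dots> = meval F v * meval G v"
    by (simp add: meval_sum[symmetric] flip: mpoly_decomp)
  finally show ?thesis .
qed

lemma meval_one [simp]: "meval 1 v = 1"
  by (simp add: meval_alt)

lemma meval_prod: "meval (\<Prod>x\<in>A. F x) v = (\<Prod>x\<in>A. meval (F x) v)"
  by (induction A rule: infinite_finite_induct) (auto simp: meval_mult)

lemma meval_mvar [simp]: "meval (mvar i) v = v i"
  by (simp add: mvar_def meval_single mon_def)

lemma meval_mconst [simp]: "meval (mconst c) v = c"
  by (simp add: mconst_def meval_single)

lemma mvars_add: "mvars (F + G) \<subseteq> mvars F \<union> mvars G"
proof
  fix i assume "i \<in> mvars (F + G)"
  then obtain m where m: "m \<in> Poly_Mapping.keys (F + G)" "i \<in> Poly_Mapping.keys m"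
    by (auto simp: mvars_def)
  have "m \<in> Poly_Mapping.keys F \<union> Poly_Mapping.keys G" by (rule subsetD[OF keys_add m(1)])
  then show "i \<in> mvars F \<union> mvars G" using m(2) by (auto simp: mvars_def)
qed

lemma mvars_diff: "mvars (F - G) \<subseteq> mvars F \<union> mvars G"
proof
  fix i assume "i \<in> mvars (F - G)"
  then obtain m where m: "m \<in> Poly_Mapping.keys (F - G)" "i \<in> Poly_Mapping.keys m"
    by (auto simp: mvars_def)
  have "m \<in> Poly_Mapping.keys F \<union> Poly_Mapping.keys G" by (rule subsetD[OF keys_diff m(1)])
  then show "i \<in> mvars F \<union> mvars G" using m(2) by (auto simp: mvars_def)
qed

lemma mvars_mult: "mvars (F * G) \<subseteq> mvars F \<union> mvars G"
proof
  fix i assume "i \<in> mvars (F * G)"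
  then obtain m where m: "m \<in> Poly_Mapping.keys (F * G)" "i \<in> Poly_Mapping.keys m"
    by (auto simp: mvars_def)
  have "m \<in> {a + b | a b. a \<in> Poly_Mapping.keys F \<and> b \<in> Poly_Mapping.keys G}"
    by (rule subsetD[OF keys_mult m(1)])
  then obtain a b where ab: "a \<in> Poly_Mapping.keys F" "b \<in> Poly_Mapping.keys G" "m = a + b"
    by blast
  have "i \<in> Poly_Mapping.keys (a + b)" using m(2) ab(3) by simp
  then have "i \<in> Poly_Mapping.keys a \<union> Poly_Mapping.keys b" by (rule subsetD[OF keys_add])
  then show "i \<in> mvars F \<union> mvars G" using ab by (auto simp: mvars_def)
qed

lemma mvars_zero [simp]: "mvars 0 = {}"
  by (simp add: mvars_def)

lemma mvars_sum: "mvars (\<Sum>x\<in>A. F x) \<subseteq> (\<Union>x\<in>A. mvars (F x))"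
proof (induction A rule: infinite_finite_induct)
  case (insert x A)
  have "mvars (\<Sum>x\<in>insert x A. F x) = mvars (F x + (\<Sum>x\<in>A. F x))" using insert by simp
  also have "\<dots> \<subseteq> mvars (F x) \<union> mvars (\<Sum>x\<in>A. F x)" by (rule mvars_add)
  also have "\<dots> \<subseteq> mvars (F x) \<union> (\<Union>x\<in>A. mvars (F x))" using insert.IH by (rule Un_mono[OF order_refl])
  finally show ?case by (simp only: UN_insert)
qed simp_all

lemma mvars_one [simp]: "mvars 1 = {}"
  by (simp add: mvars_def)

lemma mvars_prod: "mvars (\<Prod>x\<in>A. F x) \<subseteq> (\<Union>x\<in>A. mvars (F x))"
proof (induction A rule: infinite_finite_induct)
  case (insert x A)
  have "mvars (\<Prod>x\<in>insert x A. F x) = mvars (F x * (\<Prod>x\<in>A. F x))" using insert by simp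
  also have "\<dots> \<subseteq> mvars (F x) \<union> mvars (\<Prod>x\<in>A. F x)" by (rule mvars_mult)
  also have "\<dots> \<subseteq> mvars (F x) \<union> (\<Union>x\<in>A. mvars (F x))" using insert.IH by (rule Un_mono[OF order_refl])
  finally show ?case by (simp only: UN_insert)
qed simp_all

lemma mvars_mconst [simp]: "mvars (mconst c) = {}"
  by (simp add: mvars_def mconst_def)

lemma mvars_mvar: "mvars (mvar i) \<subseteq> {i}"
  by (simp add: mvars_def mvar_def)




definition fallv :: "(nat \<Rightarrow> 'a::{field,finite}) \<Rightarrow> nat \<Rightarrow> (nat \<Rightarrow> nat) \<Rightarrow> (nat \<Rightarrow> 'a poly) \<Rightarrow> 'a poly" where
  "fallv e r k v = (\<Prod>i<r. \<Prod>j<k i. v i - aseq e j)"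

lemma meval_mfalling: "meval (mfalling e r k) v = fallv e r k v"
  by (simp add: mfalling_def fallv_def meval_prod meval_diff)

lemma meval_Fb: "meval (\<Sum>k\<in>K. mconst (b k) * mfalling e r k) v = (\<Sum>k\<in>K. b k * fallv e r k v)"
  by (simp add: meval_sum meval_mult meval_mfalling)

lemma mvars_mfalling: "mvars (mfalling e r k) \<subseteq> {..<r}"
proof -
  have "mvars (mfalling e r k) \<subseteq> (\<Union>i\<in>{..<r}. mvars (\<Prod>j<k i. mvar i - mconst (aseq e j)))"
    unfolding mfalling_def by (rule mvars_prod)
  also have "\<dots> \<subseteq> (\<Union>i\<in>{..<r}. \<Union>j\<in>{..<k i}. mvars (mvar i - mconst (aseq e j)))"
    by (intro UN_mono order_refl mvars_prod)
  also have "\<dots> \<subseteq> (\<Union>i\<in>{..<r}. {i})"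
  proof (intro UN_mono order_refl UN_least)
    fix i j
    show "mvars (mvar i - mconst (aseq e j)) \<subseteq> {i}"
      using mvars_diff[of "mvar i" "mconst (aseq e j)"] mvars_mvar[of i] by auto
  qed
  finally show ?thesis by auto
qed

lemma mvars_Fb: "mvars (\<Sum>k\<in>K. mconst (b k) * mfalling e r k) \<subseteq> {..<r}"
proof -
  have "mvars (\<Sum>k\<in>K. mconst (b k) * mfalling e r k) \<subseteq> (\<Union>k\<in>K. mvars (mconst (b k) * mfalling e r k))"
    by (rule mvars_sum)
  also have "\<dots> \<subseteq> {..<r}"
  proof (rule UN_least)
    fix k
    show "mvars (mconst (b k) * mfalling e r k) \<subseteq> {..<r}"
      using mvars_mult[of "mconst (b k)" "mfalling e r k"] mvars_mfalling[of e r k] by auto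
  qed
  finally show ?thesis .
qed

lemma prod_change_one:
  assumes "finite A" "i \<in> A" "\<And>x. x \<in> A \<Longrightarrow> x \<noteq> i \<Longrightarrow> h' x = h x" "h' i = h i * t"
  shows "prod h' A = prod h A * (t :: 'b::comm_monoid_mult)"
proof -
  have "prod h' A = h' i * prod h' (A - {i})" using assms by (simp add: prod.remove)
  also have "prod h' (A - {i}) = prod h (A - {i})" using assms by (intro prod.cong) auto
  also have "h' i * prod h (A - {i}) = prod h A * t"
    using assms by (simp add: prod.remove ac_simps)
  finally show ?thesis .
qed

lemma fallv_step:
  assumes "i < r"
  shows "fallv e r (k(i := Suc (k i))) v = fallv e r k v * (v i - aseq e (k i))"
  unfolding fallv_def
  by (rule prod_change_one[where i=i]) (simp_all add: assms)

lemma fallv_zero: "fallv e r (\<lambda>_. 0) v = 1"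
  by (simp add: fallv_def)

inductive inW :: "(nat \<Rightarrow> 'a::{field,finite}) \<Rightarrow> nat \<Rightarrow> ((nat \<Rightarrow> 'a poly) \<Rightarrow> 'a poly) \<Rightarrow> bool"
  for e r where
  wterm: "(\<forall>i\<ge>r. k i = 0) \<Longrightarrow> inW e r (\<lambda>v. c * fallv e r k v)"
| wadd: "inW e r h1 \<Longrightarrow> inW e r h2 \<Longrightarrow> inW e r (\<lambda>v. h1 v + h2 v)"

lemma inW_cong: "inW e r h \<Longrightarrow> (\<And>v. h v = h' v) \<Longrightarrow> inW e r h'"
proof -
  assume "inW e r h" "\<And>v. h v = h' v"
  moreover have "h = h'" using \<open>\<And>v. h v = h' v\<close> by auto
  ultimately show ?thesis by simp
qed

lemma inW_mult_var:
  assumes "inW e r h" "i < r"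
  shows "inW e r (\<lambda>v. v i * h v)"
  using assms(1)
proof induction
  case (wterm k c)
  let ?k' = "k(i := Suc (k i))"
  have "inW e r (\<lambda>v. c * fallv e r ?k' v + (c * aseq e (k i)) * fallv e r k v)"
  proof (rule inW.wadd)
    show "inW e r (\<lambda>v. c * fallv e r ?k' v)" using wterm assms(2) by (intro inW.wterm) auto
    show "inW e r (\<lambda>v. (c * aseq e (k i)) * fallv e r k v)" using wterm by (intro inW.wterm) auto
  qed
  then show ?case
    by (rule inW_cong) (simp add: fallv_step[OF assms(2)] algebra_simps)
next
  case (wadd h1 h2)
  then have "inW e r (\<lambda>v. v i * h1 v + v i * h2 v)" by (intro inW.wadd)
  then show ?case by (rule inW_cong) (simp add: algebra_simps)
qed

lemma inW_pow:
  assumes "inW e r h" "i < r"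
  shows "inW e r (\<lambda>v. v i ^ n * h v)"
proof (induction n)
  case 0 then show ?case using assms(1) by simp
next
  case (Suc n)
  from inW_mult_var[OF Suc assms(2)] show ?case by (rule inW_cong) (simp add: ac_simps)
qed

lemma inW_one: "inW e r (\<lambda>v. 1)"
proof -
  have "inW e r (\<lambda>v. 1 * fallv e r (\<lambda>_. 0) v)" by (rule inW.wterm) simp
  then show ?thesis by (rule inW_cong) (simp add: fallv_zero)
qed

lemma inW_prodpow:
  assumes "S \<subseteq> {..<r}"
  shows "inW e r (\<lambda>v. \<Prod>i\<in>S. v i ^ n i)"
proof -
  have "finite S" using assms finite_subset by blast
  then show ?thesis using assms
  proof (induction S rule: finite_induct)
    case empty then show ?case by (simp add: inW_one)
  next
    case (insert x S)
    then have "inW e r (\<lambda>v. v x ^ n x * (\<Prod>i\<in>S. v i ^ n i))"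
      by (intro inW_pow) auto
    then show ?case by (rule inW_cong) (use insert in simp)
  qed
qed

lemma inW_mon:
  assumes "Poly_Mapping.keys m \<subseteq> {..<r}"
  shows "inW e r (mon m)"
proof -
  have A: "inW e r (\<lambda>v. \<Prod>i\<in>{..<r}. v i ^ Poly_Mapping.lookup m i)" by (rule inW_prodpow) simp
  have eq: "mon m v = (\<Prod>i<r. v i ^ Poly_Mapping.lookup m i)" for v
    by (rule mon_superset) (use assms in simp_all)
  then have B: "mon m = (\<lambda>v. \<Prod>i<r. v i ^ Poly_Mapping.lookup m i)" by (intro ext)
  show ?thesis unfolding B by (rule A)
qed

lemma div_gcd_dvd:
  fixes g c p :: "'b::semiring_gcd"
  assumes "g \<noteq> 0" "g dvd c * p"
  shows "(g div gcd g p) dvd c"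
proof -
  define d where "d = gcd g p"
  have d0: "d \<noteq> 0" using assms by (simp add: d_def)
  have g: "g = (g div d) * d" by (simp add: d_def)
  have p: "p = (p div d) * d" by (simp add: d_def)
  have cp: "c * p = (c * (p div d)) * d" using p by (metis mult.assoc)
  have "(g div d) * d dvd (c * (p div d)) * d"
    using assms(2) g cp by simp
  then have dv: "(g div d) dvd c * (p div d)" using d0 by simp
  have cop: "coprime (g div d) (p div d)" using assms by (simp add: d_def div_gcd_coprime)
  have "(g div d) dvd c" using coprime_dvd_mult_left_iff[OF cop] dv by simp
  then show ?thesis by (simp add: d_def)
qed

context enumq
begin

lemma fallv_dvd: "(\<Prod>i<r. aprod e (k i)) dvd fallv e r k v"
  unfolding fallv_def by (rule prod_dvd_prod) (rule fall_dvd)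

lemma lambda_ex:
  assumes g: "g \<noteq> 0"
  shows "\<exists>k. 0 < k \<and> g dvd aprod e k"
proof -
  define d where "d = degree g"
  define c where "c = lead_coeff g"
  define u where "u = e 1"
  have c0: "c \<noteq> 0" using g by (simp add: c_def)
  define p where "p = monom u d - smult (u / c) g"
  have "\<forall>s\<ge>d. coeff p s = 0"
  proof (intro allI impI)
    fix s assume s: "d \<le> s"
    have cp: "coeff p s = (if d = s then u else 0) - (u / c) * coeff g s"
      by (simp add: p_def coeff_monom)
    show "coeff p s = 0"
    proof (cases "s = d")
      case True
      then have "coeff g s = c" by (simp add: c_def d_def)
      then show ?thesis using cp True c0 by simp
    next
      case False
      then have "coeff g s = 0" using s by (intro coeff_eq_0) (simp add: d_def)
      then show ?thesis using cp False by simp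
    qed
  qed
  then obtain j where j: "j < card (UNIV::'a set) ^ d" "aseq e j = p" using aseq_surj by blast
  have eqs: "aseq e (card (UNIV::'a set) ^ d) - aseq e j = smult (u / c) g"
    using j(2) by (simp add: aseq_pow u_def p_def)
  have jin: "j \<in> {..<card (UNIV::'a set) ^ d}" using j(1) by simp
  have d2: "(aseq e (card (UNIV::'a set) ^ d) - aseq e j) dvd aprod e (card (UNIV::'a set) ^ d)"
    unfolding aprod_def by (rule dvd_prodI[OF finite_lessThan jin])
  have "g dvd smult (u / c) g" by (rule dvd_smult[OF dvd_refl])
  then have "g dvd aseq e (card (UNIV::'a set) ^ d) - aseq e j" by (simp only: eqs)
  then have "g dvd aprod e (card (UNIV::'a set) ^ d)" using d2 by (rule dvd_trans)
  moreover have "0 < card (UNIV::'a set) ^ d" using q_ge2 by simp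
  ultimately show ?thesis by blast
qed

lemma lambda_prop:
  assumes "g \<noteq> 0"
  shows "0 < lambda_g e g \<and> g dvd aprod e (lambda_g e g)"
  unfolding lambda_g_def using lambda_ex[OF assms] by (rule LeastI_ex)

lemma vanish_lambda:
  assumes "g \<noteq> 0" "lambda_g e g \<le> k"
  shows "g dvd (\<Prod>j<k. x - aseq e j)"
proof -
  have "g dvd aprod e (lambda_g e g)" using lambda_prop[OF assms(1)] by blast
  also have "\<dots> dvd (\<Prod>j<lambda_g e g. x - aseq e j)" by (rule fall_dvd)
  also have "\<dots> dvd (\<Prod>j<k. x - aseq e j)" using assms(2) by (intro prod_dvd_prod_subset) auto
  finally show ?thesis .
qed

lemma vanish_big:
  assumes "degree x < d" "card (UNIV::'a set) ^ d \<le> k"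
  shows "(\<Prod>j<k. x - aseq e j) = 0"
proof -
  have "\<forall>s\<ge>d. coeff x s = 0" using assms(1) by (auto intro: coeff_eq_0)
  then obtain j where j: "j < card (UNIV::'a set) ^ d" "aseq e j = x" using aseq_surj by blast
  have "j \<in> {..<k}" using j(1) assms(2) by simp
  moreover have "x - aseq e j = 0" using j(2) by simp
  ultimately show ?thesis by (intro prod_zero) blast+
qed

end



theorem mainTheorem7:
  fixes e :: "nat \<Rightarrow> 'a::{field_gcd,finite}"
    and r :: nat
    and fs :: "nat \<Rightarrow> 'a poly"
    and g :: "'a poly"
    and f :: "(nat \<Rightarrow> 'a poly) \<Rightarrow> 'a poly"
  assumes enum: "bij_betw e {..<card (UNIV :: 'a set)} UNIV" and e0: "e 0 = 0"
    and fs_nc: "\<forall>i<r. 0 < degree (fs i)"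
    and g_nc: "0 < degree g"
    and pf: "is_poly_fun r fs g f"
  shows "\<exists>!F. (\<exists>b. F = (\<Sum>k\<in>kset e r fs g. mconst (b k) * mfalling e r k) \<and>
              (\<forall>k\<in>kset e r fs g. b k = 0 \<or>
                 degree (b k) < degree (g div gcd g (\<Prod>i<r. aprod e (k i)))))
            \<and> represents r fs g f F"
proof -
  interpret E: enumq e using enum e0 by unfold_locales
  define D where "D = resdom r fs"
  define K where "K = kset e r fs g"
  define P where "P k = (\<Prod>i<r. aprod e (k i))" for k
  define G where "G k = g div gcd g (P k)" for k
  define bnd where "bnd (b :: (nat \<Rightarrow> nat) \<Rightarrow> 'a poly) \<longleftrightarrow> (\<forall>k\<in>K. b k = 0 \<or> degree (b k) < degree (G k))" for b
  have g0: "g \<noteq> 0" using g_nc by auto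
  have G0: "G k \<noteq> 0" for k
  proof
    assume "G k = 0"
    have "g = G k * gcd g (P k)" by (simp add: G_def)
    then show False using \<open>G k = 0\<close> g0 by simp
  qed
  have finK: "finite K"
  proof -
    define B where "B = (\<Sum>i<r. mu e (fs i) g)"
    have "K \<subseteq> {k. \<forall>x. (x \<in> {..<r} \<longrightarrow> k x \<in> {..<B}) \<and> (x \<notin> {..<r} \<longrightarrow> k x = 0)}"
    proof
      fix k assume k: "k \<in> K"
      have "k x < B" if "x < r" for x
      proof -
        have "k x < mu e (fs x) g" using k that by (simp add: K_def kset_def)
        also have "\<dots> \<le> B" unfolding B_def using that by (intro member_le_sum) auto
        finally show ?thesis .
      qed
      then show "k \<in> {k. \<forall>x. (x \<in> {..<r} \<longrightarrow> k x \<in> {..<B}) \<and> (x \<notin> {..<r} \<longrightarrow> k x = 0)}"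
        using k by (auto simp: K_def kset_def)
    qed
    moreover have "finite {k. \<forall>x. (x \<in> {..<r} \<longrightarrow> k x \<in> {..<B}) \<and> (x \<notin> {..<r} \<longrightarrow> k x = (0::nat))}"
      by (rule finite_set_of_finite_funs) auto
    ultimately show ?thesis by (rule finite_subset)
  qed
  have Pdvd: "P k dvd fallv e r k v" for k v
    unfolding P_def by (rule E.fallv_dvd)
  have gdvd: "g dvd G k * fallv e r k v" for k v
  proof -
    have "g = G k * gcd g (P k)" by (simp add: G_def)
    moreover have "gcd g (P k) dvd fallv e r k v" using Pdvd[of k v] by (rule dvd_trans[OF gcd_dvd2])
    ultimately show ?thesis by (metis mult_dvd_mono dvd_refl)
  qed
  have kmu: "k i < card (UNIV::'a set) ^ degree (fs i)" if "k \<in> K" "i < r" for k i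
    using that by (simp add: K_def kset_def mu_def)

  have uniq: "\<forall>k\<in>K. b1 k = b2 k"
    if b1: "bnd b1" and b2: "bnd b2"
      and ev: "\<forall>v\<in>D. (\<Sum>k\<in>K. b1 k * fallv e r k v) mod g = (\<Sum>k\<in>K. b2 k * fallv e r k v) mod g"
    for b1 b2 :: "(nat \<Rightarrow> nat) \<Rightarrow> 'a poly"
  proof -
    define c where "c k = b1 k - b2 k" for k
    have main: "\<forall>k\<in>K. (\<Sum>i<r. k i) = n \<longrightarrow> c k = 0" for n
    proof (induction n rule: less_induct)
      case (less n)
      show ?case
      proof (intro ballI impI)
        fix k assume kK: "k \<in> K" and kn: "(\<Sum>i<r. k i) = n"
        define v where "v i = (if i < r then aseq e (k i) else 0)" for i
        have vD: "v \<in> D"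
          using kmu[OF kK] fs_nc E.aseq_degree by (auto simp: D_def resdom_def v_def)
        have other: "c k' * fallv e r k' v = 0" if k': "k' \<in> K" "k' \<noteq> k" for k'
        proof (cases "\<forall>i<r. k' i \<le> k i")
          case True
          have "\<exists>i<r. k' i \<noteq> k i"
          proof (rule ccontr)
            assume "\<not> (\<exists>i<r. k' i \<noteq> k i)"
            then have "k' i = k i" for i using k' kK by (cases "i < r") (auto simp: K_def kset_def)
            then show False using k' by auto
          qed
          then obtain i0 where "i0 < r" "k' i0 \<noteq> k i0" by blast
          then have "\<exists>i\<in>{..<r}. k' i < k i" using True[rule_format, of i0] by (intro bexI[of _ i0]) auto
          then have "(\<Sum>i<r. k' i) < (\<Sum>i<r. k i)" using True
            by (intro sum_strict_mono_ex1) auto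
          then have "c k' = 0" using less.IH k' kn by blast
          then show ?thesis by simp
        next
          case False
          then obtain i where i: "i < r" "k i < k' i" by (auto simp: not_le)
          have "(\<Prod>j<k' i. v i - aseq e j) = 0"
            using i by (intro prod_zero) (auto simp: v_def intro!: bexI[of _ "k i"])
          then have "fallv e r k' v = 0"
            unfolding fallv_def using i by (intro prod_zero) auto
          then show ?thesis by simp
        qed
        have fk: "fallv e r k v = P k"
          unfolding fallv_def P_def aprod_def by (intro prod.cong) (auto simp: v_def)
        have "(\<Sum>k'\<in>K. c k' * fallv e r k' v) = c k * fallv e r k v + (\<Sum>k'\<in>K - {k}. c k' * fallv e r k' v)"
          using finK kK by (simp add: sum.remove)
        also have "(\<Sum>k'\<in>K - {k}. c k' * fallv e r k' v) = 0"
          using other by (intro sum.neutral) auto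
        finally have s1: "(\<Sum>k'\<in>K. c k' * fallv e r k' v) = c k * P k" by (simp add: fk)
        have "(\<Sum>k'\<in>K. c k' * fallv e r k' v) = (\<Sum>k\<in>K. b1 k * fallv e r k v) - (\<Sum>k\<in>K. b2 k * fallv e r k v)"
          by (simp add: c_def left_diff_distrib sum_subtractf)
        moreover have "g dvd (\<Sum>k\<in>K. b1 k * fallv e r k v) - (\<Sum>k\<in>K. b2 k * fallv e r k v)"
          using ev vD by (simp add: mod_eq_dvd_iff)
        ultimately have "g dvd c k * P k" using s1 by simp
        then have Gd: "G k dvd c k" unfolding G_def by (rule div_gcd_dvd[OF g0])
        have "c k = 0 \<or> degree (c k) < degree (G k)"
        proof (cases "b1 k = 0")
          case True then show ?thesis using b2 kK by (auto simp: bnd_def c_def)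
        next
          case n1: False
          show ?thesis
          proof (cases "b2 k = 0")
            case True then show ?thesis using b1 kK by (auto simp: bnd_def c_def)
          next
            case False
            have "degree (c k) \<le> max (degree (b1 k)) (degree (b2 k))"
              unfolding c_def by (rule degree_diff_le_max)
            moreover have "degree (b1 k) < degree (G k)" "degree (b2 k) < degree (G k)"
              using b1 b2 kK n1 False by (auto simp: bnd_def)
            ultimately show ?thesis by linarith
          qed
        qed
        moreover have "c k \<noteq> 0 \<Longrightarrow> degree (G k) \<le> degree (c k)"
          using Gd by (rule dvd_imp_degree_le)
        ultimately show "c k = 0" by linarith
      qed
    qed
    show ?thesis using main c_def by auto
  qed
  define inT where "inT h \<longleftrightarrow> (\<exists>c::(nat \<Rightarrow> nat) \<Rightarrow> 'a poly. \<forall>v\<in>D. h v mod g = (\<Sum>k\<in>K. c k * fallv e r k v) mod g)"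
    for h :: "(nat \<Rightarrow> 'a poly) \<Rightarrow> 'a poly"
  have T_cong: "inT h'" if "inT h" "\<forall>v\<in>D. h' v mod g = h v mod g" for h h'
    using that unfolding inT_def by auto
  have T_add: "inT (\<lambda>v. h1 v + h2 v)" if th1: "inT h1" and th2: "inT h2" for h1 h2
  proof -
    obtain c1 where c1: "\<forall>v\<in>D. h1 v mod g = (\<Sum>k\<in>K. c1 k * fallv e r k v) mod g"
      using th1 unfolding inT_def by blast
    obtain c2 where c2: "\<forall>v\<in>D. h2 v mod g = (\<Sum>k\<in>K. c2 k * fallv e r k v) mod g"
      using th2 unfolding inT_def by blast
    have "\<forall>v\<in>D. (h1 v + h2 v) mod g = (\<Sum>k\<in>K. (c1 k + c2 k) * fallv e r k v) mod g"
    proof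
      fix v assume v: "v \<in> D"
      have "(h1 v + h2 v) mod g = (h1 v mod g + h2 v mod g) mod g" by (simp add: mod_add_eq)
      also have "\<dots> = ((\<Sum>k\<in>K. c1 k * fallv e r k v) mod g + (\<Sum>k\<in>K. c2 k * fallv e r k v) mod g) mod g"
        using c1 c2 v by simp
      also have "\<dots> = ((\<Sum>k\<in>K. c1 k * fallv e r k v) + (\<Sum>k\<in>K. c2 k * fallv e r k v)) mod g"
        by (simp add: mod_add_eq)
      also have "(\<Sum>k\<in>K. c1 k * fallv e r k v) + (\<Sum>k\<in>K. c2 k * fallv e r k v) = (\<Sum>k\<in>K. (c1 k + c2 k) * fallv e r k v)"
        by (simp add: distrib_right sum.distrib)
      finally show "(h1 v + h2 v) mod g = (\<Sum>k\<in>K. (c1 k + c2 k) * fallv e r k v) mod g" .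
    qed
    then show ?thesis unfolding inT_def by (rule exI[of _ "\<lambda>k. c1 k + c2 k"])
  qed
  have T_smult: "inT (\<lambda>v. a * h v)" if th: "inT h" for a h
  proof -
    obtain c where c: "\<forall>v\<in>D. h v mod g = (\<Sum>k\<in>K. c k * fallv e r k v) mod g"
      using th unfolding inT_def by blast
    have "\<forall>v\<in>D. (a * h v) mod g = (\<Sum>k\<in>K. (a * c k) * fallv e r k v) mod g"
    proof
      fix v assume v: "v \<in> D"
      have "(a * h v) mod g = (a * (h v mod g)) mod g" by (simp add: mod_mult_right_eq)
      also have "\<dots> = (a * ((\<Sum>k\<in>K. c k * fallv e r k v) mod g)) mod g" using c v by simp
      also have "\<dots> = (a * (\<Sum>k\<in>K. c k * fallv e r k v)) mod g" by (simp add: mod_mult_right_eq)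
      also have "a * (\<Sum>k\<in>K. c k * fallv e r k v) = (\<Sum>k\<in>K. (a * c k) * fallv e r k v)"
        by (simp add: sum_distrib_left mult.assoc)
      finally show "(a * h v) mod g = (\<Sum>k\<in>K. (a * c k) * fallv e r k v) mod g" .
    qed
    then show ?thesis unfolding inT_def by (rule exI[of _ "\<lambda>k. a * c k"])
  qed
  have T_zero: "inT (\<lambda>v. 0)"
    unfolding inT_def by (rule exI[of _ "\<lambda>_. 0"]) simp
  have T_sum: "inT (\<lambda>v. \<Sum>x\<in>A. h x v)" if "finite A" "\<forall>x\<in>A. inT (h x)" for A and h :: "'c \<Rightarrow> (nat \<Rightarrow> 'a poly) \<Rightarrow> 'a poly"
    using that
  proof (induction A rule: finite_induct)
    case empty then show ?case using T_zero by simp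
  next
    case (insert x A)
    then have "inT (\<lambda>v. h x v + (\<Sum>x\<in>A. h x v))" by (intro T_add) auto
    then show ?case by (rule T_cong) (use insert in simp)
  qed
  have T_term: "inT (\<lambda>v. fallv e r k v)" if k0: "\<forall>i\<ge>r. k i = 0" for k
  proof (cases "k \<in> K")
    case True
    have "\<forall>v\<in>D. fallv e r k v mod g = (\<Sum>k'\<in>K. (if k' = k then 1 else 0) * fallv e r k' v) mod g"
    proof
      fix v
      have "(\<Sum>k'\<in>K. (if k' = k then 1 else 0) * fallv e r k' v) = (\<Sum>k'\<in>K. if k' = k then fallv e r k' v else 0)"
        by (intro sum.cong) auto
      also have "\<dots> = fallv e r k v" using True finK by (simp add: sum.delta')
      finally show "fallv e r k v mod g = (\<Sum>k'\<in>K. (if k' = k then 1 else 0) * fallv e r k' v) mod g" by simp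
    qed
    then show ?thesis unfolding inT_def by (rule exI[of _ "\<lambda>k'. if k' = k then 1 else 0"])
  next
    case False
    then obtain i where i: "i < r" "\<not> k i < mu e (fs i) g" using k0 by (auto simp: K_def kset_def)
    then have cases: "card (UNIV::'a set) ^ degree (fs i) \<le> k i \<or> lambda_g e g \<le> k i"
      by (auto simp: mu_def)
    have "\<forall>v\<in>D. fallv e r k v mod g = (\<Sum>k'\<in>K. 0 * fallv e r k' v) mod g"
    proof
      fix v assume v: "v \<in> D"
      have "g dvd (\<Prod>j<k i. v i - aseq e j)"
      proof (cases "card (UNIV::'a set) ^ degree (fs i) \<le> k i")
        case True
        have "degree (v i) < degree (fs i)" using v i by (simp add: D_def resdom_def)
        then have "(\<Prod>j<k i. v i - aseq e j) = 0" using True by (rule E.vanish_big)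
        then show ?thesis by (metis dvd_0_right)
      next
        case False
        then show ?thesis using cases g0 E.vanish_lambda by blast
      qed
      also have "\<dots> dvd fallv e r k v" unfolding fallv_def using i by (intro dvd_prodI) auto
      finally show "fallv e r k v mod g = (\<Sum>k'\<in>K. 0 * fallv e r k' v) mod g" by simp
    qed
    then show ?thesis unfolding inT_def by (rule exI[of _ "\<lambda>_. 0"])
  qed
  have WT: "inT h" if "inW e r h" for h
    using that
  proof induction
    case (wterm k c)
    then show ?case using T_term T_smult by blast
  next
    case (wadd h1 h2)
    then show ?case using T_add by blast
  qed
  obtain F0 where F0: "represents r fs g f F0" using pf unfolding is_poly_fun_def by blast
  have "inT (\<lambda>v. \<Sum>m\<in>Poly_Mapping.keys F0. Poly_Mapping.lookup F0 m * mon m v)"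
  proof (rule T_sum)
    show "\<forall>m\<in>Poly_Mapping.keys F0. inT (\<lambda>v. Poly_Mapping.lookup F0 m * mon m v)"
    proof
      fix m assume m: "m \<in> Poly_Mapping.keys F0"
      have "Poly_Mapping.keys m \<subseteq> mvars F0" using m by (auto simp: mvars_def)
      also have "\<dots> \<subseteq> {..<r}" using F0 by (simp add: represents_def)
      finally have "inW e r (mon m)" by (rule inW_mon)
      then have "inT (mon m)" by (rule WT)
      then show "inT (\<lambda>v. Poly_Mapping.lookup F0 m * mon m v)" by (rule T_smult)
    qed
  qed simp
  then have "inT f"
    by (rule T_cong) (use F0 in \<open>simp add: represents_def D_def meval_alt\<close>)
  then obtain c where c: "\<forall>v\<in>D. f v mod g = (\<Sum>k\<in>K. c k * fallv e r k v) mod g"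
    unfolding inT_def by blast
  define b where "b k = c k mod G k" for k
  have bb: "bnd b" unfolding bnd_def b_def using degree_mod_less[OF G0] by blast
  have beval: "(\<Sum>k\<in>K. b k * fallv e r k v) mod g = f v mod g" if v: "v \<in> D" for v
  proof -
    have "g dvd (\<Sum>k\<in>K. c k * fallv e r k v) - (\<Sum>k\<in>K. b k * fallv e r k v)"
    proof -
      have "(\<Sum>k\<in>K. c k * fallv e r k v) - (\<Sum>k\<in>K. b k * fallv e r k v)
          = (\<Sum>k\<in>K. (c k div G k) * (G k * fallv e r k v))"
      proof -
        have "c k * fallv e r k v - b k * fallv e r k v = (c k div G k) * (G k * fallv e r k v)" for k
        proof -
          have "c k = c k div G k * G k + b k" by (simp add: b_def)
          then have "c k - b k = c k div G k * G k" by (metis add_diff_cancel_right')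
          then show ?thesis by (metis left_diff_distrib mult.assoc)
        qed
        then show ?thesis by (simp add: sum_subtractf[symmetric])
      qed
      also have "g dvd \<dots>" by (intro dvd_sum dvd_mult gdvd)
      finally show ?thesis .
    qed
    then have "(\<Sum>k\<in>K. c k * fallv e r k v) mod g = (\<Sum>k\<in>K. b k * fallv e r k v) mod g"
      by (simp add: mod_eq_dvd_iff)
    then show ?thesis using c v by simp
  qed
  show ?thesis (is "\<exists>!F. ?\<Phi> F")
  proof (rule ex_ex1I)
    show "\<exists>F. ?\<Phi> F"
    proof (intro exI conjI)
      let ?F = "\<Sum>k\<in>kset e r fs g. mconst (b k) * mfalling e r k"
      show "?F = ?F" ..
      show "\<forall>k\<in>kset e r fs g. b k = 0 \<or> degree (b k) < degree (g div gcd g (\<Prod>i<r. aprod e (k i)))"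
        using bb unfolding bnd_def K_def G_def P_def .
      show "represents r fs g f ?F"
        unfolding represents_def
      proof
        show "mvars ?F \<subseteq> {..<r}" by (rule mvars_Fb)
        show "\<forall>v\<in>resdom r fs. meval ?F v mod g = f v mod g"
          using beval by (simp add: meval_Fb D_def K_def)
      qed
    qed
  next
    fix F1 F2 assume h1: "?\<Phi> F1" and h2: "?\<Phi> F2"
    obtain b1 where b1: "F1 = (\<Sum>k\<in>K. mconst (b1 k) * mfalling e r k)" "bnd b1"
      using h1 unfolding bnd_def K_def G_def P_def by blast
    obtain b2 where b2: "F2 = (\<Sum>k\<in>K. mconst (b2 k) * mfalling e r k)" "bnd b2"
      using h2 unfolding bnd_def K_def G_def P_def by blast
    have "\<forall>v\<in>D. (\<Sum>k\<in>K. b1 k * fallv e r k v) mod g = (\<Sum>k\<in>K. b2 k * fallv e r k v) mod g"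
    proof
      fix v assume v: "v \<in> D"
      have "meval F1 v mod g = f v mod g" "meval F2 v mod g = f v mod g"
        using h1 h2 v by (auto simp: represents_def D_def)
      then show "(\<Sum>k\<in>K. b1 k * fallv e r k v) mod g = (\<Sum>k\<in>K. b2 k * fallv e r k v) mod g"
        using b1 b2 by (simp add: meval_Fb)
    qed
    then have "\<forall>k\<in>K. b1 k = b2 k" using uniq b1(2) b2(2) by blast
    then show "F1 = F2" using b1(1) b2(1) by simp
  qed
qed


end
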